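(* Consider the control system, with state $(J_1,J_3,K_2,Q_2,J_0,Q_1,K_1,Q_3,K_3,J_2)\in\mathbb{R}^{10}$ and scalar control $g(t)$, \[ \begin{aligned} \dot J_1&=2gJ_3,\quad \dot J_3=-2gJ_1+2gK_2,\quad \dot K_2=2gJ_3+2Q_2,\quad \dot Q_2=-2K_2,\\ \dot J_0&=-2gQ_1,\quad \dot Q_1=-2gJ_0-2K_1+2gQ_3,\quad \dot K_1=2Q_1+2gK_3,\\ \dot Q_3&=-2gQ_1-2K_3,\quad \dot K_3=-2gK_1+2Q_3-2gJ_2,\quad \dot J_2=-2gK_3, \end{aligned} \] with initial state $(J_1,J_3,K_2,Q_2)=(-1,0,0,0)$, $(J_0,Q_1,K_1,Q_3,K_3,J_2)=(1,0,0,0,0,0)$. Then for every $G_0>0$ the target state $(J_1,J_3,K_2,Q_2)=(1,0,0,0)$, $(J_0,Q_1,K_1,Q_3,K_3,J_2)=(1,0,0,0,0,0)$ belongs to the reachable set of this system with controls satisfying $-G_0\le g(t)\le G_0$; that is, there exist a control $g$ with $|g(t)|\le G_0$ and a time $T>0$ such that the solution starting from the initial state is at the target state at time $T$.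
   Context: This system describes the (time-normalized) expectation values of generators of $Sp(4)$ for a cavity optomechanical system in the red-detuned regime, where $g(t)$ is the photon–phonon coupling rate in units of the mechanical frequency; the target state corresponds to a complete swap of photon and phonon populations (cooling of the mechanical resonator). *)

theory Defs
  imports "HOL-Analysis.Analysis"
begin

text \<open>State vector ordering (indices 1..10):
  (J1, J3, K2, Q2, J0, Q1, K1, Q3, K3, J2).\<close>

definition sp4_field :: "real \<Rightarrow> real^10 \<Rightarrow> real^10" where
  "sp4_field g x = vector
     [ 2*g*(x$2),
       -2*g*(x$1) + 2*g*(x$3),
       2*g*(x$2) + 2*(x$4),
       -2*(x$3),
       -2*g*(x$6),
       -2*g*(x$5) - 2*(x$7) + 2*g*(x$8),
       2*(x$6) + 2*g*(x$9),
       -2*g*(x$6) - 2*(x$9),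
       -2*g*(x$7) + 2*(x$8) - 2*g*(x$10),
       -2*g*(x$9) ]"

definition sp4_init :: "real^10" where
  "sp4_init = vector [-1, 0, 0, 0, 1, 0, 0, 0, 0, 0]"

definition sp4_target :: "real^10" where
  "sp4_target = vector [1, 0, 0, 0, 1, 0, 0, 0, 0, 0]"

definition sp4_solution :: "(real \<Rightarrow> real) \<Rightarrow> real \<Rightarrow> (real \<Rightarrow> real^10) \<Rightarrow> bool" where
  "sp4_solution g T x \<longleftrightarrow>
     x 0 = sp4_init \<and>
     (\<forall>t\<in>{0..T}. ((\<lambda>s. sp4_field (g s) (x s)) has_integral (x t - x 0)) {0..t})"

end

theory Submission imports Defs begin

lemma exhaust_10:
  fixes x :: 10
  shows "x = 1 \<or> x = 2 \<or> x = 3 \<or> x = 4 \<or> x = 5 \<or> x = 6 \<or> x = 7 \<or> x = 8 \<or> x = 9 \<or> x = 10"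
proof (induct x)
  case (of_int z)
  then have "0 \<le> z" "z < 10" by simp_all
  then have "z = 0 \<or> z = 1 \<or> z = 2 \<or> z = 3 \<or> z = 4 \<or> z = 5 \<or> z = 6 \<or> z = 7 \<or> z = 8 \<or> z = 9" by presburger
  then show ?case by auto
qed

lemma vecderiv:
  fixes x :: "real \<Rightarrow> real^'n"
  assumes "\<And>i. ((\<lambda>t. x t $ i) has_real_derivative (x' $ i)) (at t within S)"
  shows "(x has_vector_derivative x') (at t within S)"
  unfolding has_vector_derivative_def
  apply (subst has_derivative_componentwise_within)
proof (clarsimp simp: Basis_vec_def inner_axis)
  fix i
  have e: "(\<lambda>h. h * x' $ i) = (*) (x' $ i)" by (rule ext) (simp add: mult.commute)
  show "((\<lambda>xa. x xa $ i) has_derivative (\<lambda>h. h * x' $ i)) (at t within S)"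
    unfolding e using assms[of i] by (simp add: has_field_derivative_def)
qed

definition fJ1 :: "real \<Rightarrow> real \<Rightarrow> real \<Rightarrow> real" where
  "fJ1 a b t = ((a-b)^4 * cos((a+b)*t) - (a+b)^4 * cos((a-b)*t)) / (16*a*b)"
definition fJ3 :: "real \<Rightarrow> real \<Rightarrow> real \<Rightarrow> real" where
  "fJ3 a b t = ((a+b)^3 * sin((a-b)*t) - (a-b)^3 * sin((a+b)*t)) / (8*a*b)"
definition fK2 :: "real \<Rightarrow> real \<Rightarrow> real \<Rightarrow> real \<Rightarrow> real" where
  "fK2 c a b t = - (c*c) * (cos((a+b)*t) - cos((a-b)*t)) / (a*b)"
definition fQ2 :: "real \<Rightarrow> real \<Rightarrow> real \<Rightarrow> real \<Rightarrow> real" where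
  "fQ2 c a b t = c * ((a-b) * sin((a+b)*t) - (a+b) * sin((a-b)*t)) / (2*a*b)"
definition fJ0 :: "real \<Rightarrow> real \<Rightarrow> real \<Rightarrow> real \<Rightarrow> real" where
  "fJ0 c a b t = 1 + (c*c)/(2*a*a) + (c*c)/(2*b*b) - (c*c)/(2*a*a) * cos(2*a*t) - (c*c)/(2*b*b) * cos(2*b*t)"
definition fQ1 :: "real \<Rightarrow> real \<Rightarrow> real \<Rightarrow> real \<Rightarrow> real" where
  "fQ1 c a b t = - (c/(2*a)) * sin(2*a*t) - (c/(2*b)) * sin(2*b*t)"
definition fK1 :: "real \<Rightarrow> real \<Rightarrow> real \<Rightarrow> real \<Rightarrow> real" where
  "fK1 c a b t = - (c*(1+c))/(2*a*a) - (c*(1-c))/(2*b*b) + (c*(1+c))/(2*a*a) * cos(2*a*t) + (c*(1-c))/(2*b*b) * cos(2*b*t)"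
definition fQ3 :: "real \<Rightarrow> real \<Rightarrow> real \<Rightarrow> real \<Rightarrow> real" where
  "fQ3 c a b t = (c*(1+c))/(2*a*a) - (c*(1-c))/(2*b*b) - (c*(1+c))/(2*a*a) * cos(2*a*t) + (c*(1-c))/(2*b*b) * cos(2*b*t)"
definition fK3 :: "real \<Rightarrow> real \<Rightarrow> real \<Rightarrow> real \<Rightarrow> real" where
  "fK3 c a b t = - (c/(2*a)) * sin(2*a*t) + (c/(2*b)) * sin(2*b*t)"
definition fJ2 :: "real \<Rightarrow> real \<Rightarrow> real \<Rightarrow> real \<Rightarrow> real" where
  "fJ2 c a b t = (c*c)/(2*a*a) - (c*c)/(2*b*b) - (c*c)/(2*a*a) * cos(2*a*t) + (c*c)/(2*b*b) * cos(2*b*t)"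

definition sol :: "real \<Rightarrow> real \<Rightarrow> real \<Rightarrow> real \<Rightarrow> real^10" where
  "sol c a b t = vector [fJ1 a b t, fJ3 a b t, fK2 c a b t, fQ2 c a b t, fJ0 c a b t,
     fQ1 c a b t, fK1 c a b t, fQ3 c a b t, fK3 c a b t, fJ2 c a b t]"

lemma sol_comp:
  "sol c a b t $ 1 = fJ1 a b t" "sol c a b t $ 2 = fJ3 a b t" "sol c a b t $ 3 = fK2 c a b t"
  "sol c a b t $ 4 = fQ2 c a b t" "sol c a b t $ 5 = fJ0 c a b t" "sol c a b t $ 6 = fQ1 c a b t"
  "sol c a b t $ 7 = fK1 c a b t" "sol c a b t $ 8 = fQ3 c a b t" "sol c a b t $ 9 = fK3 c a b t"
  "sol c a b t $ 10 = fJ2 c a b t"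
  by (simp_all add: sol_def vector_def)

lemma field_comp:
  fixes x :: "real^10"
  shows
  "sp4_field g x $ 1 = 2*g*(x$2)"
  "sp4_field g x $ 2 = -2*g*(x$1) + 2*g*(x$3)"
  "sp4_field g x $ 3 = 2*g*(x$2) + 2*(x$4)"
  "sp4_field g x $ 4 = -2*(x$3)"
  "sp4_field g x $ 5 = -2*g*(x$6)"
  "sp4_field g x $ 6 = -2*g*(x$5) - 2*(x$7) + 2*g*(x$8)"
  "sp4_field g x $ 7 = 2*(x$6) + 2*g*(x$9)"
  "sp4_field g x $ 8 = -2*g*(x$6) - 2*(x$9)"
  "sp4_field g x $ 9 = -2*g*(x$7) + 2*(x$8) - 2*g*(x$10)"
  "sp4_field g x $ 10 = -2*g*(x$9)"
  by (simp_all add: sp4_field_def vector_def)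

context
  fixes a b c :: real
  assumes a: "a > 0" and b: "b > 0" and ha: "a^2 = 1 + 2*c" and hb: "b^2 = 1 - 2*c"
begin

lemma d1: "(fJ1 a b has_real_derivative 2*c*fJ3 a b t) (at t)"
proof -
  have d: "(fJ1 a b has_real_derivative ((a+b)^4*(a-b) * sin((a-b)*t) - (a-b)^4*(a+b) * sin((a+b)*t))/(16*a*b)) (at t)"
    unfolding fJ1_def using a b by (auto intro!: derivative_eq_intros simp: field_simps)
  have e: "((a+b)^4*(a-b) * sin((a-b)*t) - (a-b)^4*(a+b) * sin((a+b)*t))/(16*a*b) = 2*c*fJ3 a b t"
    unfolding fJ3_def using a b ha hb by (simp add: divide_simps) algebra
  show ?thesis using d e by simp
qed

lemma d2: "(fJ3 a b has_real_derivative -2*c*fJ1 a b t + 2*c*fK2 c a b t) (at t)"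
proof -
  have d: "(fJ3 a b has_real_derivative ((a+b)^3*(a-b) * cos((a-b)*t) - (a-b)^3*(a+b) * cos((a+b)*t))/(8*a*b)) (at t)"
    unfolding fJ3_def using a b by (auto intro!: derivative_eq_intros simp: field_simps)
  have e: "((a+b)^3*(a-b) * cos((a-b)*t) - (a-b)^3*(a+b) * cos((a+b)*t))/(8*a*b) = -2*c*fJ1 a b t + 2*c*fK2 c a b t"
    unfolding fJ1_def fK2_def using a b ha hb by (simp add: divide_simps) algebra
  show ?thesis using d e by simp
qed

lemma d3: "(fK2 c a b has_real_derivative 2*c*fJ3 a b t + 2*fQ2 c a b t) (at t)"
proof -
  have d: "(fK2 c a b has_real_derivative (c*c) * ((a+b) * sin((a+b)*t) - (a-b) * sin((a-b)*t))/(a*b)) (at t)"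
    unfolding fK2_def using a b by (auto intro!: derivative_eq_intros simp: field_simps)
  have e: "(c*c) * ((a+b) * sin((a+b)*t) - (a-b) * sin((a-b)*t))/(a*b) = 2*c*fJ3 a b t + 2*fQ2 c a b t"
    unfolding fJ3_def fQ2_def using a b ha hb by (simp add: divide_simps) algebra
  show ?thesis using d e by simp
qed

lemma d4: "(fQ2 c a b has_real_derivative -2*fK2 c a b t) (at t)"
proof -
  have d: "(fQ2 c a b has_real_derivative c * ((a-b)*(a+b) * cos((a+b)*t) - (a+b)*(a-b) * cos((a-b)*t))/(2*a*b)) (at t)"
    unfolding fQ2_def using a b by (auto intro!: derivative_eq_intros simp: field_simps)
  have e: "c * ((a-b)*(a+b) * cos((a+b)*t) - (a+b)*(a-b) * cos((a-b)*t))/(2*a*b) = -2*fK2 c a b t"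
    unfolding fK2_def using a b ha hb by (simp add: divide_simps) algebra
  show ?thesis using d e by simp
qed

lemma d5: "(fJ0 c a b has_real_derivative -2*c*fQ1 c a b t) (at t)"
proof -
  have d: "(fJ0 c a b has_real_derivative (c*c)/a * sin(2*a*t) + (c*c)/b * sin(2*b*t)) (at t)"
    unfolding fJ0_def using a b by (auto intro!: derivative_eq_intros simp: field_simps)
  have e: "(c*c)/a * sin(2*a*t) + (c*c)/b * sin(2*b*t) = -2*c*fQ1 c a b t"
    unfolding fQ1_def using a b ha hb by (simp add: divide_simps) (simp add: algebra_simps)
  show ?thesis using d e by simp
qed

lemma d6: "(fQ1 c a b has_real_derivative -2*c*fJ0 c a b t - 2*fK1 c a b t + 2*c*fQ3 c a b t) (at t)"
proof -
  have d: "(fQ1 c a b has_real_derivative - c * cos(2*a*t) - c * cos(2*b*t)) (at t)"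
    unfolding fQ1_def using a b by (auto intro!: derivative_eq_intros simp: field_simps)
  have e: "- c * cos(2*a*t) - c * cos(2*b*t) = -2*c*fJ0 c a b t - 2*fK1 c a b t + 2*c*fQ3 c a b t"
    unfolding fJ0_def fK1_def fQ3_def using a b ha hb by (simp add: divide_simps) algebra
  show ?thesis using d e by simp
qed

lemma d7: "(fK1 c a b has_real_derivative 2*fQ1 c a b t + 2*c*fK3 c a b t) (at t)"
proof -
  have d: "(fK1 c a b has_real_derivative - (c*(1+c))/a * sin(2*a*t) - (c*(1-c))/b * sin(2*b*t)) (at t)"
    unfolding fK1_def using a b by (auto intro!: derivative_eq_intros simp: field_simps)
  have e: "- (c*(1+c))/a * sin(2*a*t) - (c*(1-c))/b * sin(2*b*t) = 2*fQ1 c a b t + 2*c*fK3 c a b t"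
    unfolding fQ1_def fK3_def using a b ha hb by (simp add: divide_simps) (simp add: algebra_simps)
  show ?thesis using d e by simp
qed

lemma d8: "(fQ3 c a b has_real_derivative -2*c*fQ1 c a b t - 2*fK3 c a b t) (at t)"
proof -
  have d: "(fQ3 c a b has_real_derivative (c*(1+c))/a * sin(2*a*t) - (c*(1-c))/b * sin(2*b*t)) (at t)"
    unfolding fQ3_def using a b by (auto intro!: derivative_eq_intros simp: field_simps)
  have e: "(c*(1+c))/a * sin(2*a*t) - (c*(1-c))/b * sin(2*b*t) = -2*c*fQ1 c a b t - 2*fK3 c a b t"
    unfolding fQ1_def fK3_def using a b ha hb by (simp add: divide_simps) (simp add: algebra_simps)
  show ?thesis using d e by simp
qed

lemma d9: "(fK3 c a b has_real_derivative -2*c*fK1 c a b t + 2*fQ3 c a b t - 2*c*fJ2 c a b t) (at t)"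
proof -
  have d: "(fK3 c a b has_real_derivative - c * cos(2*a*t) + c * cos(2*b*t)) (at t)"
    unfolding fK3_def using a b by (auto intro!: derivative_eq_intros simp: field_simps)
  have e: "- c * cos(2*a*t) + c * cos(2*b*t) = -2*c*fK1 c a b t + 2*fQ3 c a b t - 2*c*fJ2 c a b t"
    unfolding fK1_def fQ3_def fJ2_def using a b ha hb by (simp add: divide_simps) algebra
  show ?thesis using d e by simp
qed

lemma d10: "(fJ2 c a b has_real_derivative -2*c*fK3 c a b t) (at t)"
proof -
  have d: "(fJ2 c a b has_real_derivative (c*c)/a * sin(2*a*t) - (c*c)/b * sin(2*b*t)) (at t)"
    unfolding fJ2_def using a b by (auto intro!: derivative_eq_intros simp: field_simps)
  have e: "(c*c)/a * sin(2*a*t) - (c*c)/b * sin(2*b*t) = -2*c*fK3 c a b t"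
    unfolding fK3_def using a b ha hb by (simp add: divide_simps) (simp add: algebra_simps)
  show ?thesis using d e by simp
qed


lemma sol_deriv: "(sol c a b has_vector_derivative sp4_field c (sol c a b t)) (at t within S)"
proof (rule vecderiv)
  fix i :: 10
  have ext: "(\<lambda>t. sol c a b t $ 1) = fJ1 a b" "(\<lambda>t. sol c a b t $ 2) = fJ3 a b"
    "(\<lambda>t. sol c a b t $ 3) = fK2 c a b" "(\<lambda>t. sol c a b t $ 4) = fQ2 c a b"
    "(\<lambda>t. sol c a b t $ 5) = fJ0 c a b" "(\<lambda>t. sol c a b t $ 6) = fQ1 c a b"
    "(\<lambda>t. sol c a b t $ 7) = fK1 c a b" "(\<lambda>t. sol c a b t $ 8) = fQ3 c a b"
    "(\<lambda>t. sol c a b t $ 9) = fK3 c a b" "(\<lambda>t. sol c a b t $ 10) = fJ2 c a b"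
    by (auto simp: sol_comp)
  note W = has_field_derivative_at_within
  show "((\<lambda>t. sol c a b t $ i) has_real_derivative sp4_field c (sol c a b t) $ i) (at t within S)"
    using exhaust_10[of i]
    apply (elim disjE)
    apply (simp_all only: ext field_comp sol_comp)
    apply (rule W[OF d1]) apply (rule W[OF d2]) apply (rule W[OF d3]) apply (rule W[OF d4])
    apply (rule W[OF d5]) apply (rule W[OF d6]) apply (rule W[OF d7]) apply (rule W[OF d8])
    apply (rule W[OF d9]) apply (rule W[OF d10])
    done
qed

lemma sol_init: "sol c a b 0 = sp4_init"
proof -
  have "fJ1 a b 0 = -1" unfolding fJ1_def using a b ha hb by (simp add: divide_simps) algebra
  then show ?thesis unfolding sol_def sp4_init_def
    by (simp add: fJ3_def fK2_def fQ2_def fJ0_def fQ1_def fK1_def fQ3_def fK3_def fJ2_def)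
qed

lemma sol_solution: "sp4_solution (\<lambda>_. c) T (sol c a b)"
  unfolding sp4_solution_def
proof (intro conjI ballI sol_init)
  fix t assume "t \<in> {0..T}"
  then have "0 \<le> t" by simp
  then show "((\<lambda>s. sp4_field c (sol c a b s)) has_integral sol c a b t - sol c a b 0) {0..t}"
    by (intro fundamental_theorem_of_calculus) (auto intro: sol_deriv)
qed


lemma sol_target:
  assumes "cos((a+b)*T) = -1" "cos((a-b)*T) = -1" "sin((a+b)*T) = 0" "sin((a-b)*T) = 0"
    "cos(2*a*T) = 1" "cos(2*b*T) = 1" "sin(2*a*T) = 0" "sin(2*b*T) = 0"
  shows "sol c a b T = sp4_target"
proof -
  have "fJ1 a b T = 1" unfolding fJ1_def using a b ha hb assms by (simp add: divide_simps) algebra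
  then show ?thesis unfolding sol_def sp4_target_def using assms
    by (simp add: fJ3_def fK2_def fQ2_def fJ0_def fQ1_def fK1_def fQ3_def fK3_def fJ2_def)
qed

end

theorem theorem1:
  fixes G0 :: real
  assumes "G0 > 0"
  shows "\<exists>g T x. T > 0 \<and> g \<in> borel_measurable lborel \<and>
           (\<forall>t\<in>{0..T}. \<bar>g t\<bar> \<le> G0) \<and>
           sp4_solution g T x \<and> x T = sp4_target"
proof -
  define N :: nat where "N = nat (ceiling (1/G0)) + 1"
  have N1: "real N \<ge> 1" unfolding N_def by simp
  have NG: "real N \<ge> 1/G0" unfolding N_def by linarith
  define M :: nat where "M = N + 1"
  define s where "s = sqrt (2 / (real M ^ 2 + real N ^ 2))"
  have den: "real M ^ 2 + real N ^ 2 > 0" using N1 by (simp add: add_nonneg_pos)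
  have s0: "s > 0" unfolding s_def using den by simp
  have s2: "s^2 = 2 / (real M ^ 2 + real N ^ 2)" unfolding s_def using den by simp
  define a where "a = real M * s"
  define b where "b = real N * s"
  define c where "c = (a^2 - 1) / 2"
  define T where "T = pi / s"
  have a0: "a > 0" unfolding a_def M_def using s0 by simp
  have b0: "b > 0" unfolding b_def using s0 N1 by simp
  have ab2: "a^2 + b^2 = 2"
  proof -
    have "a^2 + b^2 = (real M ^ 2 + real N ^ 2) * s^2" unfolding a_def b_def
      by (simp add: power_mult_distrib algebra_simps)
    also have "\<dots> = 2" unfolding s2 using den by (simp add: divide_simps M_def)
    finally show ?thesis .
  qed
  have ha: "a^2 = 1 + 2*c" unfolding c_def by (simp add: field_simps)
  have hb: "b^2 = 1 - 2*c" unfolding c_def using ab2 by (simp add: field_simps)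
  have cval: "c = (2 * real N + 1) / (2 * (2 * real N ^ 2 + 2 * real N + 1))"
  proof -
    have "c = (a^2 - b^2) / 4" unfolding c_def using ab2 by (simp add: field_simps)
    also have "\<dots> = (real M ^ 2 - real N ^ 2) * s^2 / 4" unfolding a_def b_def
      by (simp add: power_mult_distrib algebra_simps)
    also have "\<dots> = (2 * real N + 1) / (2 * (2 * real N ^ 2 + 2 * real N + 1))"
    proof -
      have p1: "0 < 2 + (real N * 4 + real N * (real N * 4))" using N1 by (simp add: add_pos_nonneg)
      have p2: "0 < 4 + (real N * 8 + real N * (real N * 8))" using N1 by (simp add: add_pos_nonneg)
      show ?thesis unfolding s2 M_def using den p1 p2
        by (simp add: field_simps power2_eq_square frac_eq_eq)
    qed
    finally show ?thesis .
  qed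
  have dpos: "0 < 2 * (2 * real N ^ 2 + 2 * real N + 1)" by (simp add: add_nonneg_pos)
  have c0: "c \<ge> 0" unfolding cval using dpos by (intro divide_nonneg_pos) auto
  have cG: "c \<le> G0"
  proof -
    have "c \<le> 1 / (2 * real N)" unfolding cval using N1 dpos
      by (simp add: divide_simps power2_eq_square algebra_simps)
    also have "\<dots> \<le> 1 / real N" using N1 by (simp add: divide_simps)
    also have "\<dots> \<le> G0" using NG N1 assms by (simp add: divide_simps mult.commute)
    finally show ?thesis .
  qed
  have T0: "T > 0" unfolding T_def using s0 by simp
  have e1: "(a+b)*T = real (2*N+1) * pi" unfolding a_def b_def T_def M_def using s0
    by (simp add: field_simps)
  have e2: "(a-b)*T = real 1 * pi" unfolding a_def b_def T_def M_def using s0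
    by (simp add: field_simps)
  have e3: "2*a*T = real (2*M) * pi" unfolding a_def T_def using s0 by (simp add: field_simps)
  have e4: "2*b*T = real (2*N) * pi" unfolding b_def T_def using s0 by (simp add: field_simps)
  have trig: "cos((a+b)*T) = -1" "cos((a-b)*T) = -1" "sin((a+b)*T) = 0" "sin((a-b)*T) = 0"
    "cos(2*a*T) = 1" "cos(2*b*T) = 1" "sin(2*a*T) = 0" "sin(2*b*T) = 0"
    unfolding e1 e2 e3 e4 cos_npi sin_npi by simp_all
  show ?thesis
    apply (rule exI[of _ "\<lambda>_. c"], rule exI[of _ T], rule exI[of _ "sol c a b"])
    using T0 c0 cG sol_solution[OF a0 b0 ha hb] sol_target[OF a0 b0 ha hb trig] by auto
qed

end
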